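(* Let $d\ge1$, $z\ge0$, let $0<\varphi_1\le\cdots\le\varphi_d$ and let $\tilde v_1,\ldots,\tilde v_d\in\mathbb C$ be nonzero. For $\lambda>0$ with $\lambda\notin\{\varphi_1,\dots,\varphi_d\}$ define $$f(\lambda)=\lambda^2\sum_{m=1}^d\frac{\varphi_m|\tilde v_m|^2}{(\lambda-\varphi_m)^2}-\lambda+z,\qquad g(\lambda)=1-\sum_{m=1}^d\frac{\varphi_m|\tilde v_m|^2}{\lambda-\varphi_m}-\frac{z}{\lambda}-\log\lambda.$$ If $f$ has roots $0<\lambda_1\le\lambda_2$ both lying in an interval $(\varphi_{L-1},\varphi_L)$ for some $L$, then $g(\lambda_1)\ge g(\lambda_2)$.
   Context: Standing assumption of the paper for this lemma: all indices belong to the support $\mathcal S=\{m:\varphi_m|\tilde v_m|^2\ne0\}$, i.e. $\mathcal S=\{1,\ldots,d\}$. Here $\varphi_m$ are the eigenvalues of a Hermitian positive semi-definite matrix and $\tilde v_m$ the coordinates of a vector in its eigenbasis; $g(\lambda)$ is the value of the objective $\mathbf y^{\mathsf H}\mathbf y-\log((\mathbf y+\mathbf v)^{\mathsf H}\mathbf U(\mathbf y+\mathbf v)+z)$ at the stationary point associated with a root $\lambda$ of $f$ (this interpretation is not needed for the statement). *)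

theory Defs
  imports "HOL-Analysis.Analysis"
begin

definition f_fun :: "nat \<Rightarrow> (nat \<Rightarrow> real) \<Rightarrow> (nat \<Rightarrow> complex) \<Rightarrow> real \<Rightarrow> real \<Rightarrow> real" where
  "f_fun d phi v z lam =
     lam\<^sup>2 * (\<Sum>m = 1..d. phi m * (cmod (v m))\<^sup>2 / (lam - phi m)\<^sup>2) - lam + z"

definition g_fun :: "nat \<Rightarrow> (nat \<Rightarrow> real) \<Rightarrow> (nat \<Rightarrow> complex) \<Rightarrow> real \<Rightarrow> real \<Rightarrow> real" where
  "g_fun d phi v z lam =
     1 - (\<Sum>m = 1..d. phi m * (cmod (v m))\<^sup>2 / (lam - phi m)) - z / lam - ln lam"

end

theory Submission
  imports Defs
begin

lemma mono_chain:
  fixes phi :: "nat \<Rightarrow> real"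
  assumes "\<forall>m\<in>{1..<d}. phi m \<le> phi (Suc m)"
  shows "1 \<le> i \<Longrightarrow> i \<le> j \<Longrightarrow> j \<le> d \<Longrightarrow> phi i \<le> phi j"
proof (induction j)
  case 0 then show ?case by simp
next
  case (Suc j)
  show ?case
  proof (cases "i = Suc j")
    case True then show ?thesis by simp
  next
    case False
    then have "i \<le> j" using Suc by simp
    then have "phi i \<le> phi j" using Suc by simp
    moreover have "phi j \<le> phi (Suc j)" using assms Suc \<open>i \<le> j\<close> by auto
    ultimately show ?thesis by simp
  qed
qed

lemma A: "(x::real) \<noteq> p \<Longrightarrow> ((x - p)\<^sup>2 - x * (2 * x - 2 * p)) * a / (x - p) ^ 4 =
     a * (- x - p) / (x - p) ^ 3"
  apply (subgoal_tac "x - p \<noteq> 0")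
  apply (simp add: divide_simps)
   apply (simp add: algebra_simps power2_eq_square eval_nat_numeral)
  apply simp done
lemma B: "(x::real) \<noteq> p \<Longrightarrow>(- ((x - p) ^ 3) - (- x - p) * (3 * (x - p)\<^sup>2)) * a / (x - p) ^ 6 =
     a * (2 * x + 4 * p) / (x - p) ^ 4"
  apply (subgoal_tac "x - p \<noteq> 0")
  apply (simp add: divide_simps)
   apply (simp add: algebra_simps power2_eq_square eval_nat_numeral)
  apply simp done
lemma dk1: "(x::real) \<noteq> p \<Longrightarrow> ((\<lambda>x. a * (x / (x - p)^2)) has_real_derivative
           a * ((- x - p) / (x - p)^3)) (at x)"
  apply (rule derivative_eq_intros refl | simp)+
  using A by simp
lemma dk2: "(x::real) \<noteq> p \<Longrightarrow> ((\<lambda>x. a * ((- x - p) / (x - p)^3)) has_real_derivative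
           a * ((2 * x + 4 * p) / (x - p)^4)) (at x)"
  apply (rule derivative_eq_intros refl | simp)+
  using B by simp
lemma dk3: "(x::real) \<noteq> p \<Longrightarrow> ((\<lambda>x. a / (x - p)) has_real_derivative
           - (a / (x - p)^2)) (at x)"
  apply (rule derivative_eq_intros refl | simp)+
  by (simp add: power2_eq_square)
lemma dz1': "(x::real) \<noteq> 0 \<Longrightarrow> (S has_real_derivative T) (at x) \<Longrightarrow> ((\<lambda>x. S x + z * inverse x - 1) has_real_derivative T - z / x^2) (at x)"
  apply (rule derivative_eq_intros refl | simp)+
  by (simp add: power2_eq_square divide_simps)
lemma dz2: "(x::real) \<noteq> 0 \<Longrightarrow> (S has_real_derivative T) (at x) \<Longrightarrow> ((\<lambda>x. S x - z / x^2) has_real_derivative T + 2 * z / x^3) (at x)"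
  apply (rule derivative_eq_intros refl | simp)+
  by (simp add: eval_nat_numeral divide_simps)
lemma dz3: "(x::real) > 0 \<Longrightarrow> (S has_real_derivative T) (at x) \<Longrightarrow> ((\<lambda>x. 1 - S x - z / x - ln x) has_real_derivative - T + z / x^2 - 1 / x) (at x)"
  apply (rule derivative_eq_intros refl | simp)+
  by (simp add: eval_nat_numeral divide_simps)

theorem lemma4:
  fixes d L :: nat and phi :: "nat \<Rightarrow> real" and v :: "nat \<Rightarrow> complex"
    and z lam1 lam2 :: real
  assumes "d \<ge> 1" and "z \<ge> 0"
    and "\<forall>m\<in>{1..d}. 0 < phi m"
    and "\<forall>m\<in>{1..<d}. phi m \<le> phi (Suc m)"
    and "\<forall>m\<in>{1..d}. v m \<noteq> 0"
    and "L \<in> {1..d+1}"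
    and "0 < lam1" and "lam1 \<le> lam2"
    and "f_fun d phi v z lam1 = 0" and "f_fun d phi v z lam2 = 0"
    and "L = 1 \<or> phi (L - 1) < lam1"
    and "L = d + 1 \<or> lam2 < phi L"
  shows "g_fun d phi v z lam1 \<ge> g_fun d phi v z lam2"
proof -
  define a where "a m = phi m * (cmod (v m))\<^sup>2" for m
  define I where "I = {lam1..lam2}"
  have apos: "a m \<ge> 0" if "m \<in> {1..d}" for m
    using assms(3) that unfolding a_def by (simp add: less_imp_le)
  have ppos: "phi m > 0" if "m \<in> {1..d}" for m using assms(3) that by auto
  have sep: "phi m < lam1 \<or> lam2 < phi m" if m: "m \<in> {1..d}" for m
  proof (cases "m < L")
    case True
    then have "L \<noteq> 1" "L - 1 \<le> d" using m assms(6) by auto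
    then have "phi (L - 1) < lam1" using assms(11) by auto
    moreover have "phi m \<le> phi (L - 1)"
      using mono_chain[OF assms(4), of m "L - 1"] m True \<open>L - 1 \<le> d\<close> by auto
    ultimately show ?thesis by simp
  next
    case False
    then have "L \<noteq> d + 1" "1 \<le> L" using m assms(6) by auto
    then have "lam2 < phi L" using assms(12) by auto
    moreover have "phi L \<le> phi m"
      using mono_chain[OF assms(4), of L m] m False \<open>1 \<le> L\<close> by auto
    ultimately show ?thesis by simp
  qed
  have ne: "x - phi m \<noteq> 0" if "x \<in> I" "m \<in> {1..d}" for x m
    using sep[OF that(2)] that(1) unfolding I_def by auto
  have xpos: "x > 0" if "x \<in> I" for x using that assms(7) unfolding I_def by auto
  define h where "h x = (\<Sum>m = 1..d. a m * (x / (x - phi m)^2)) + z * inverse x - 1" for x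
  define h1 where "h1 x = (\<Sum>m = 1..d. a m * ((- x - phi m) / (x - phi m)^3)) - z / x^2" for x
  define h2 where "h2 x = (\<Sum>m = 1..d. a m * ((2 * x + 4 * phi m) / (x - phi m)^4)) + 2 * z / x^3" for x
  have fh: "f_fun d phi v z x = x * h x" if "x \<in> I" for x
  proof -
    have x0: "x \<noteq> 0" using xpos[OF that] by simp
    have "x * h x = x * (\<Sum>m = 1..d. a m * (x / (x - phi m)^2)) + x * (z * inverse x) - x"
      unfolding h_def by (simp add: right_diff_distrib distrib_left)
    also have "x * (z * inverse x) = z" using x0 by simp
    also have "x * (\<Sum>m = 1..d. a m * (x / (x - phi m)^2)) =
        x\<^sup>2 * (\<Sum>m = 1..d. phi m * (cmod (v m))\<^sup>2 / (x - phi m)\<^sup>2)"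
      unfolding sum_distrib_left a_def by (rule sum.cong) (simp_all add: power2_eq_square)
    finally show ?thesis unfolding f_fun_def by simp
  qed
  have d1: "(h has_real_derivative h1 x) (at x)" if "x \<in> I" for x
  proof -
    have "((\<lambda>x. a m * (x / (x - phi m)^2)) has_real_derivative
           a m * ((- x - phi m) / (x - phi m)^3)) (at x)" if m: "m \<in> {1..d}" for m
    proof -
      have n: "x - phi m \<noteq> 0" using ne[OF \<open>x \<in> I\<close> m] .
      show ?thesis using dk1 n by simp
    qed
    then have s: "((\<lambda>x. \<Sum>m = 1..d. a m * (x / (x - phi m)^2)) has_real_derivative
           (\<Sum>m = 1..d. a m * ((- x - phi m) / (x - phi m)^3))) (at x)"
      by (intro DERIV_sum) auto
    have x0: "x \<noteq> 0" using xpos[OF that] by simp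
    show ?thesis unfolding h_def h1_def by (rule dz1'[OF x0 s])
  qed
  have d2: "(h1 has_real_derivative h2 x) (at x)" if "x \<in> I" for x
  proof -
    have "((\<lambda>x. a m * ((- x - phi m) / (x - phi m)^3)) has_real_derivative
           a m * ((2 * x + 4 * phi m) / (x - phi m)^4)) (at x)" if m: "m \<in> {1..d}" for m
    proof -
      have n: "x - phi m \<noteq> 0" using ne[OF \<open>x \<in> I\<close> m] .
      show ?thesis using dk2 n by simp
    qed
    then have s: "((\<lambda>x. \<Sum>m = 1..d. a m * ((- x - phi m) / (x - phi m)^3)) has_real_derivative
           (\<Sum>m = 1..d. a m * ((2 * x + 4 * phi m) / (x - phi m)^4))) (at x)"
      by (intro DERIV_sum) auto
    have x0: "x \<noteq> 0" using xpos[OF that] by simp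
    show ?thesis unfolding h1_def h2_def by (rule dz2[OF x0 s])
  qed
  have h2pos: "h2 x \<ge> 0" if "x \<in> I" for x
  proof -
    have "x > 0" using xpos[OF that] .
    then have "a m * ((2 * x + 4 * phi m) / (x - phi m)^4) \<ge> 0" if "m \<in> {1..d}" for m
      using apos[OF that] ppos[OF that] by (intro mult_nonneg_nonneg divide_nonneg_nonneg) auto
    moreover have "2 * z / x^3 \<ge> 0" using \<open>x > 0\<close> assms(2) by simp
    ultimately show ?thesis unfolding h2_def by (intro add_nonneg_nonneg sum_nonneg) auto
  qed
  have conv: "convex_on I h"
    by (rule f''_ge0_imp_convex[OF _ d1 d2 h2pos]) (auto simp: I_def)
  have h1z: "h lam1 = 0" and h2z: "h lam2 = 0"
    using fh[of lam1] fh[of lam2] assms(7-10) by (auto simp: I_def)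
  have hneg: "h x \<le> 0" if "x \<in> I" for x
    using convex_onD_Icc'[OF conv[unfolded I_def] that[unfolded I_def]] h1z h2z by simp
  define G where "G x = 1 - (\<Sum>m = 1..d. a m / (x - phi m)) - z / x - ln x" for x
  have gG: "g_fun d phi v z x = G x" for x unfolding g_fun_def G_def a_def by simp
  have dG: "(G has_real_derivative h x / x) (at x)" if "x \<in> I" for x
  proof -
    have "((\<lambda>x. a m / (x - phi m)) has_real_derivative
           - (a m / (x - phi m)^2)) (at x)" if m: "m \<in> {1..d}" for m
    proof -
      have n: "x - phi m \<noteq> 0" using ne[OF \<open>x \<in> I\<close> m] .
      show ?thesis using dk3 n by simp
    qed
    then have s: "((\<lambda>x. \<Sum>m = 1..d. a m / (x - phi m)) has_real_derivative
           (\<Sum>m = 1..d. - (a m / (x - phi m)^2))) (at x)"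
      by (intro DERIV_sum) auto
    have x0: "x > 0" using xpos[OF that] by simp
    have S: "(\<Sum>m = 1..d. a m * (x / (x - phi m)^2)) / x = (\<Sum>m = 1..d. a m / (x - phi m)^2)"
      unfolding sum_divide_distrib by (rule sum.cong) (use x0 in simp_all)
    have e: "h x / x = - (\<Sum>m = 1..d. - (a m / (x - phi m)^2)) + z / x^2 - 1 / x"
    proof -
      have "h x / x = (\<Sum>m = 1..d. a m * (x / (x - phi m)^2)) / x + z * inverse x / x - 1 / x"
        unfolding h_def by (simp add: diff_divide_distrib add_divide_distrib)
      then show ?thesis using S by (simp add: sum_negf power2_eq_square divide_inverse)
    qed
    show ?thesis unfolding G_def e by (rule dz3[OF x0 s])
  qed
  have "G lam1 \<ge> G lam2"
  proof (rule DERIV_nonpos_imp_decreasing_open[OF assms(8)])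
    fix x assume "lam1 < x" "x < lam2"
    then have xI: "x \<in> I" unfolding I_def by auto
    show "\<exists>y. DERIV G x :> y \<and> y \<le> 0"
      using dG[OF xI] hneg[OF xI] xpos[OF xI] by (intro exI[of _ "h x / x"]) (auto simp: divide_nonpos_pos)
  next
    show "continuous_on {lam1..lam2} G"
    proof (rule continuous_at_imp_continuous_on, rule ballI)
      fix x assume "x \<in> {lam1..lam2}"
      then have "x \<in> I" by (simp add: I_def)
      show "isCont G x" by (rule DERIV_isCont[OF dG[OF \<open>x \<in> I\<close>]])
    qed
  qed
  then show ?thesis by (simp add: gG)
qed

end
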